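(* For every MPDA $\mathcal A$ there is a pop-normalized MPDA $\mathcal A'$ with $L(\mathcal A')=L(\mathcal A)$.
   Context: A Moore push-down automaton (MPDA) is $\mathcal A=(Q,\Sigma,\Gamma,\delta,\tau,I,F)$ with finite sets $Q$ (states), $\Sigma$ (input symbols), $\Gamma$ (stack symbols), transitions $\delta\subseteq(Q\times\Gamma^{\le1}\times\Gamma^{\le1}\times Q)\setminus(Q\times\Gamma\times\Gamma\times Q)$ with $\Gamma^{\le1}=\{\varepsilon\}\cup\Gamma$, output function $\tau:Q\to\Sigma$, and $I,F\subseteq Q$. Configurations are $\langle q,\alpha\rangle\in Q\times\Gamma^*$; moves $\langle q,\gamma\alpha\rangle\vdash\langle q',\gamma'\alpha\rangle$ for $(q,\gamma,\gamma',q')\in\delta$ whenever $\gamma\alpha\ne\varepsilon$. Initial configurations: $q\in I$, $\alpha\in\Gamma$; final: $q\in F$, $\alpha=\varepsilon$. $L(\mathcal A)$ is the set of strings $\tau(q_0)\cdots\tau(q_n)$ for accepting runs $\langle q_0,\alpha_0\rangle\vdash\cdots\vdash\langle q_n,\alpha_n\rangle$ from an initial to a final configuration. The MPDA is pop-normalized if there is a map $\mathrm{return}:\Gamma\to Q$ such that $q'=\mathrm{return}(\gamma)$ for every transition $(q,\gamma,\varepsilon,q')\in\delta$ with $\gamma\in\Gamma$. *)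

theory Defs
  imports Main
begin

text \<open>Moore push-down automata. A transition (q, g, g', q') uses g, g' :: 'g option
  for elements of Gamma^{<=1} (None = epsilon).\<close>

record ('q, 'a, 'g) mpda =
  states :: "'q set"
  inputs :: "'a set"
  stack  :: "'g set"
  trans  :: "('q \<times> 'g option \<times> 'g option \<times> 'q) set"
  out    :: "'q \<Rightarrow> 'a"
  init   :: "'q set"
  fin    :: "'q set"

definition opt_list :: "'g option \<Rightarrow> 'g list" where
  "opt_list x = (case x of None \<Rightarrow> [] | Some g \<Rightarrow> [g])"

definition is_mpda :: "('q, 'a, 'g) mpda \<Rightarrow> bool" where
  "is_mpda A \<longleftrightarrow>
     finite (states A) \<and> finite (inputs A) \<and> finite (stack A) \<and>
     (\<forall>(q, g, g', q') \<in> trans A.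
         q \<in> states A \<and> q' \<in> states A \<and>
         set_option g \<subseteq> stack A \<and> set_option g' \<subseteq> stack A \<and>
         \<not> (g \<noteq> None \<and> g' \<noteq> None)) \<and>
     (\<forall>q \<in> states A. out A q \<in> inputs A) \<and>
     init A \<subseteq> states A \<and> fin A \<subseteq> states A"

definition mstep :: "('q, 'a, 'g) mpda \<Rightarrow> 'q \<times> 'g list \<Rightarrow> 'q \<times> 'g list \<Rightarrow> bool" where
  "mstep A c c' \<longleftrightarrow>
     (\<exists>g g' \<alpha>. (fst c, g, g', fst c') \<in> trans A \<and>
        snd c = opt_list g @ \<alpha> \<and> snd c' = opt_list g' @ \<alpha> \<and> snd c \<noteq> [])"

definition accepting_run :: "('q, 'a, 'g) mpda \<Rightarrow> ('q \<times> 'g list) list \<Rightarrow> bool" where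
  "accepting_run A cs \<longleftrightarrow>
     cs \<noteq> [] \<and>
     (\<forall>i. Suc i < length cs \<longrightarrow> mstep A (cs ! i) (cs ! Suc i)) \<and>
     fst (hd cs) \<in> init A \<and> (\<exists>g \<in> stack A. snd (hd cs) = [g]) \<and>
     fst (last cs) \<in> fin A \<and> snd (last cs) = []"

definition lang :: "('q, 'a, 'g) mpda \<Rightarrow> 'a list set" where
  "lang A = {map (\<lambda>c. out A (fst c)) cs | cs. accepting_run A cs}"

definition pop_normalized :: "('q, 'a, 'g) mpda \<Rightarrow> bool" where
  "pop_normalized A \<longleftrightarrow>
     (\<exists>ret. (\<forall>g \<in> stack A. ret g \<in> states A) \<and>
        (\<forall>q g q'. (q, Some g, None, q') \<in> trans A \<longrightarrow> q' = ret g))"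

end

theory Submission
  imports Defs "HOL-Library.Countable_Set"
begin

definition eQ :: "('q, 'a, 'g) mpda \<Rightarrow> 'q \<Rightarrow> nat" where
  "eQ A = to_nat_on (states A)"
definition dQ :: "('q, 'a, 'g) mpda \<Rightarrow> nat \<Rightarrow> 'q" where
  "dQ A = from_nat_into (states A)"
definition eG :: "('q, 'a, 'g) mpda \<Rightarrow> 'g \<times> 'q \<Rightarrow> nat" where
  "eG A = to_nat_on (stack A \<times> states A)"
definition dG :: "('q, 'a, 'g) mpda \<Rightarrow> nat \<Rightarrow> 'g \<times> 'q" where
  "dG A = from_nat_into (stack A \<times> states A)"

lemma dQ_eQ: "is_mpda A \<Longrightarrow> q \<in> states A \<Longrightarrow> dQ A (eQ A q) = q"
  unfolding is_mpda_def dQ_def eQ_def by (simp add: countable_finite)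

lemma dG_eG: "is_mpda A \<Longrightarrow> g \<in> stack A \<Longrightarrow> q \<in> states A \<Longrightarrow> dG A (eG A (g, q)) = (g, q)"
  unfolding is_mpda_def dG_def eG_def by (simp add: countable_finite)

definition PN :: "('q, 'a, 'g) mpda \<Rightarrow> (nat, 'a, nat) mpda" where
  "PN A = \<lparr> states = eQ A ` states A, inputs = inputs A,
     stack = eG A ` (stack A \<times> states A),
     trans = {(eQ A q, None, None, eQ A q') | q q'. (q, None, None, q') \<in> trans A}
       \<union> {(eQ A q, None, Some (eG A (g, r)), eQ A q') | q g r q'. (q, None, Some g, q') \<in> trans A \<and> r \<in> states A}
       \<union> {(eQ A q, Some (eG A (g, q')), None, eQ A q') | q g q'. (q, Some g, None, q') \<in> trans A},
     out = (\<lambda>n. out A (dQ A n)), init = eQ A ` init A, fin = eQ A ` fin A \<rparr>"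

lemma trans_ok: "is_mpda A \<Longrightarrow> (q, g, g', q') \<in> trans A \<Longrightarrow>
   q \<in> states A \<and> q' \<in> states A \<and> set_option g \<subseteq> stack A \<and> set_option g' \<subseteq> stack A \<and> \<not> (g \<noteq> None \<and> g' \<noteq> None)"
  unfolding is_mpda_def by fast

lemma PN_mpda: assumes "is_mpda A" shows "is_mpda (PN A)"
proof -
  have f: "finite (states A)" "finite (inputs A)" "finite (stack A)" "init A \<subseteq> states A" "fin A \<subseteq> states A"
    "\<forall>q\<in>states A. out A q \<in> inputs A"
    using assms unfolding is_mpda_def by auto
  show ?thesis
    unfolding is_mpda_def PN_def using f
    by (auto simp: dQ_eQ[OF assms] dest: trans_ok[OF assms])
qed

lemma PN_popnorm: assumes "is_mpda A" shows "pop_normalized (PN A)"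
  unfolding pop_normalized_def
proof (intro exI[of _ "\<lambda>n. eQ A (snd (dG A n))"] conjI allI impI ballI)
  fix n assume "n \<in> stack (PN A)"
  then show "eQ A (snd (dG A n)) \<in> states (PN A)"
    by (auto simp: PN_def dG_eG[OF assms])
next
  fix q g q' assume "(q, Some g, None, q') \<in> trans (PN A)"
  then show "q' = eQ A (snd (dG A g))"
    by (auto simp: PN_def dG_eG[OF assms] dest: trans_ok[OF assms])
qed


lemma mstep_D:
  assumes "is_mpda A" "mstep A c c'"
  obtains \<alpha> where "(fst c, None, None, fst c') \<in> trans A" "snd c = \<alpha>" "snd c' = \<alpha>" "\<alpha> \<noteq> []"
  | \<alpha> g' where "(fst c, None, Some g', fst c') \<in> trans A" "snd c = \<alpha>" "snd c' = g' # \<alpha>" "\<alpha> \<noteq> []"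
  | \<alpha> g where "(fst c, Some g, None, fst c') \<in> trans A" "snd c = g # \<alpha>" "snd c' = \<alpha>"
proof -
  from assms(2) obtain g g' \<alpha> where t: "(fst c, g, g', fst c') \<in> trans A"
    "snd c = opt_list g @ \<alpha>" "snd c' = opt_list g' @ \<alpha>" "snd c \<noteq> []"
    unfolding mstep_def by blast
  show thesis
  proof (cases g)
    case None
    show ?thesis
    proof (cases g')
      case None then show ?thesis using that(1) t \<open>g = None\<close> by (auto simp: opt_list_def)
    next
      case (Some x) then show ?thesis using that(2) t \<open>g = None\<close> by (auto simp: opt_list_def)
    qed
  next
    case (Some x)
    then have "g' = None" using trans_ok[OF assms(1) t(1)] by auto
    then show ?thesis using that(3) t \<open>g = Some x\<close> by (auto simp: opt_list_def)
  qed
qed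

lemma mstep_I1: "(fst c, None, None, fst c') \<in> trans A \<Longrightarrow> snd c = \<alpha> \<Longrightarrow> snd c' = \<alpha> \<Longrightarrow> \<alpha> \<noteq> [] \<Longrightarrow> mstep A c c'"
  unfolding mstep_def by (rule exI[of _ None], rule exI[of _ None]) (auto simp: opt_list_def)
lemma mstep_I2: "(fst c, None, Some g', fst c') \<in> trans A \<Longrightarrow> snd c = \<alpha> \<Longrightarrow> snd c' = g' # \<alpha> \<Longrightarrow> \<alpha> \<noteq> [] \<Longrightarrow> mstep A c c'"
  unfolding mstep_def by (rule exI[of _ None], rule exI[of _ "Some g'"]) (auto simp: opt_list_def)
lemma mstep_I3: "(fst c, Some g, None, fst c') \<in> trans A \<Longrightarrow> snd c = g # \<alpha> \<Longrightarrow> snd c' = \<alpha> \<Longrightarrow> mstep A c c'"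
  unfolding mstep_def by (rule exI[of _ "Some g"], rule exI[of _ None]) (auto simp: opt_list_def)

definition proj :: "('q, 'a, 'g) mpda \<Rightarrow> nat \<times> nat list \<Rightarrow> 'q \<times> 'g list" where
  "proj A c = (dQ A (fst c), map (\<lambda>n. fst (dG A n)) (snd c))"

lemma proj_step: assumes "is_mpda A" "mstep (PN A) c c'" shows "mstep A (proj A c) (proj A c')"
proof (rule mstep_D[OF PN_mpda[OF assms(1)] assms(2)])
  fix \<alpha> assume 1: "(fst c, None, None, fst c') \<in> trans (PN A)" "snd c = \<alpha>" "snd c' = \<alpha>" "\<alpha> \<noteq> []"
  then obtain q q' where "fst c = eQ A q" "fst c' = eQ A q'" "(q, None, None, q') \<in> trans A"
    by (auto simp: PN_def)
  then show ?thesis using 1 trans_ok[OF assms(1)]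
    by (intro mstep_I1[where \<alpha> = "map (\<lambda>n. fst (dG A n)) \<alpha>"]) (auto simp: proj_def dQ_eQ[OF assms(1)])
next
  fix \<alpha> g' assume 2: "(fst c, None, Some g', fst c') \<in> trans (PN A)" "snd c = \<alpha>" "snd c' = g' # \<alpha>" "\<alpha> \<noteq> []"
  then obtain q q' g r where "fst c = eQ A q" "fst c' = eQ A q'" "(q, None, Some g, q') \<in> trans A"
     "g' = eG A (g, r)" "r \<in> states A"
    by (auto simp: PN_def)
  moreover have "g \<in> stack A" using trans_ok[OF assms(1) \<open>(q, None, Some g, q') \<in> trans A\<close>] by simp
  ultimately show ?thesis using 2 trans_ok[OF assms(1)]
    by (intro mstep_I2[where \<alpha> = "map (\<lambda>n. fst (dG A n)) \<alpha>" and g' = g])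
       (auto simp: proj_def dQ_eQ[OF assms(1)] dG_eG[OF assms(1)])
next
  fix \<alpha> g' assume 3: "(fst c, Some g', None, fst c') \<in> trans (PN A)" "snd c = g' # \<alpha>" "snd c' = \<alpha>"
  then obtain q q' g where "fst c = eQ A q" "fst c' = eQ A q'" "(q, Some g, None, q') \<in> trans A"
     "g' = eG A (g, q')"
    by (auto simp: PN_def)
  moreover have "g \<in> stack A" "q' \<in> states A" using trans_ok[OF assms(1) \<open>(q, Some g, None, q') \<in> trans A\<close>] by simp_all
  ultimately show ?thesis using 3 trans_ok[OF assms(1)]
    by (intro mstep_I3[where \<alpha> = "map (\<lambda>n. fst (dG A n)) \<alpha>" and g = g])
       (auto simp: proj_def dQ_eQ[OF assms(1)] dG_eG[OF assms(1)])
qed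

lemma lang_sub1: assumes "is_mpda A" shows "lang (PN A) \<subseteq> lang A"
proof
  fix w assume "w \<in> lang (PN A)"
  then obtain cs where r: "accepting_run (PN A) cs" and w: "w = map (\<lambda>c. out (PN A) (fst c)) cs"
    unfolding lang_def by blast
  have sub: "init A \<subseteq> states A" "fin A \<subseteq> states A" using assms unfolding is_mpda_def by auto
  have "accepting_run A (map (proj A) cs)"
    using r sub unfolding accepting_run_def
    apply (auto simp: proj_step[OF assms] hd_map last_map)
      apply (auto simp: PN_def proj_def dQ_eQ[OF assms] dG_eG[OF assms] subsetD)
    done
  moreover have "w = map (\<lambda>c. out A (fst c)) (map (proj A) cs)"
    using w by (simp add: PN_def proj_def)
  ultimately show "w \<in> lang A" unfolding lang_def by blast
qed


fun ann_stack :: "(nat \<Rightarrow> 'x \<Rightarrow> 'y) \<Rightarrow> 'x list \<Rightarrow> 'y list" where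
  "ann_stack f [] = []"
| "ann_stack f (x # xs) = f (length xs) x # ann_stack f xs"

lemma ann_stack_cong: "(\<And>k x. k < length xs \<Longrightarrow> f k x = g k x) \<Longrightarrow> ann_stack f xs = ann_stack g xs"
  by (induction xs) auto

lemma ann_stack_Nil_iff: "ann_stack f xs = [] \<longleftrightarrow> xs = []"
  by (cases xs) auto

definition ann :: "('q \<times> 'g list) list \<Rightarrow> nat \<Rightarrow> nat \<Rightarrow> 'q" where
  "ann cs i k = fst (cs ! (LEAST j. i < j \<and> length (snd (cs ! j)) \<le> k))"

lemma ann_shift: assumes "k < length (snd (cs ! Suc i))" shows "ann cs i k = ann cs (Suc i) k"
proof -
  have "(\<lambda>j. i < j \<and> length (snd (cs ! j)) \<le> k) = (\<lambda>j. Suc i < j \<and> length (snd (cs ! j)) \<le> k)"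
  proof
    fix j show "(i < j \<and> length (snd (cs ! j)) \<le> k) = (Suc i < j \<and> length (snd (cs ! j)) \<le> k)"
      using assms by (cases "j = Suc i") auto
  qed
  then show ?thesis unfolding ann_def by simp
qed

lemma ann_pop: assumes "length (snd (cs ! Suc i)) \<le> k" shows "ann cs i k = fst (cs ! Suc i)"
proof -
  have "(LEAST j. i < j \<and> length (snd (cs ! j)) \<le> k) = Suc i"
    by (rule Least_equality) (use assms in auto)
  then show ?thesis unfolding ann_def by simp
qed

lemma run_inv: assumes "is_mpda A" "accepting_run A cs" "i < length cs"
  shows "fst (cs ! i) \<in> states A \<and> set (snd (cs ! i)) \<subseteq> stack A"
  using assms(3)
proof (induction i)
  case 0
  then show ?case using assms(1,2) unfolding accepting_run_def is_mpda_def by (auto simp: hd_conv_nth)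
next
  case (Suc i)
  then have st: "mstep A (cs ! i) (cs ! Suc i)" and ih: "set (snd (cs ! i)) \<subseteq> stack A"
    using assms(2) unfolding accepting_run_def by auto
  show ?case
  proof (rule mstep_D[OF assms(1) st])
    fix \<alpha> assume "(fst (cs ! i), None, None, fst (cs ! Suc i)) \<in> trans A" "snd (cs ! i) = \<alpha>" "snd (cs ! Suc i) = \<alpha>"
    then show ?case using trans_ok[OF assms(1)] ih by fastforce
  next
    fix \<alpha> g' assume "(fst (cs ! i), None, Some g', fst (cs ! Suc i)) \<in> trans A" "snd (cs ! i) = \<alpha>" "snd (cs ! Suc i) = g' # \<alpha>"
    then show ?case using trans_ok[OF assms(1)] ih by fastforce
  next
    fix \<alpha> g' assume "(fst (cs ! i), Some g', None, fst (cs ! Suc i)) \<in> trans A" "snd (cs ! i) = g' # \<alpha>" "snd (cs ! Suc i) = \<alpha>"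
    then show ?case using trans_ok[OF assms(1)] ih by fastforce
  qed
qed

lemma ann_in: assumes "is_mpda A" "accepting_run A cs" "Suc i < length cs" "snd (cs ! i) \<noteq> []"
  shows "ann cs i k \<in> states A"
proof -
  let ?N = "length cs"
  have ne: "cs \<noteq> []" and l: "snd (last cs) = []" using assms(2) unfolding accepting_run_def by auto
  have "i \<noteq> ?N - 1" using assms(4) l ne by (auto simp: last_conv_nth)
  then have p: "i < ?N - 1 \<and> length (snd (cs ! (?N - 1))) \<le> k" using l ne assms(3) by (auto simp: last_conv_nth)
  then have "(LEAST j. i < j \<and> length (snd (cs ! j)) \<le> k) \<le> ?N - 1" by (rule Least_le)
  then have "(LEAST j. i < j \<and> length (snd (cs ! j)) \<le> k) < ?N" using ne by (cases cs) auto
  then show ?thesis unfolding ann_def using run_inv[OF assms(1,2)] by blast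
qed

definition lift :: "('q, 'a, 'g) mpda \<Rightarrow> ('q \<times> 'g list) list \<Rightarrow> nat \<Rightarrow> nat \<times> nat list" where
  "lift A cs i = (eQ A (fst (cs ! i)), ann_stack (\<lambda>k x. eG A (x, ann cs i k)) (snd (cs ! i)))"

lemma lift_step: assumes "is_mpda A" "accepting_run A cs" "Suc i < length cs"
  shows "mstep (PN A) (lift A cs i) (lift A cs (Suc i))"
proof -
  have st: "mstep A (cs ! i) (cs ! Suc i)" using assms(2,3) unfolding accepting_run_def by auto
  show ?thesis
  proof (rule mstep_D[OF assms(1) st])
    fix \<alpha> assume h: "(fst (cs ! i), None, None, fst (cs ! Suc i)) \<in> trans A" "snd (cs ! i) = \<alpha>" "snd (cs ! Suc i) = \<alpha>" "\<alpha> \<noteq> []"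
    have e: "ann_stack (\<lambda>k x. eG A (x, ann cs i k)) \<alpha> = ann_stack (\<lambda>k x. eG A (x, ann cs (Suc i) k)) \<alpha>"
    proof (rule ann_stack_cong)
      fix k x assume "k < length \<alpha>"
      then show "eG A (x, ann cs i k) = eG A (x, ann cs (Suc i) k)" using ann_shift[of k cs i] h(3) by simp
    qed
    show ?thesis
      apply (rule mstep_I1[where \<alpha> = "ann_stack (\<lambda>k x. eG A (x, ann cs i k)) \<alpha>"])
      using h e by (auto simp: lift_def PN_def ann_stack_Nil_iff)
  next
    fix \<alpha> g' assume h: "(fst (cs ! i), None, Some g', fst (cs ! Suc i)) \<in> trans A" "snd (cs ! i) = \<alpha>" "snd (cs ! Suc i) = g' # \<alpha>" "\<alpha> \<noteq> []"
    have e: "ann_stack (\<lambda>k x. eG A (x, ann cs i k)) \<alpha> = ann_stack (\<lambda>k x. eG A (x, ann cs (Suc i) k)) \<alpha>"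
    proof (rule ann_stack_cong)
      fix k x assume "k < length \<alpha>"
      then show "eG A (x, ann cs i k) = eG A (x, ann cs (Suc i) k)" using ann_shift[of k cs i] h(3) by simp
    qed
    have r: "ann cs (Suc i) (length \<alpha>) \<in> states A"
    proof (rule ann_in[OF assms(1,2)])
      show "snd (cs ! Suc i) \<noteq> []" using h by simp
      have ne: "cs \<noteq> []" and l: "snd (last cs) = []" using assms(2) unfolding accepting_run_def by auto
      show "Suc (Suc i) < length cs"
      proof (rule ccontr)
        assume "\<not> Suc (Suc i) < length cs"
        then have "Suc i = length cs - 1" using assms(3) by simp
        then show False using l ne h(3) by (auto simp: last_conv_nth)
      qed
    qed
    show ?thesis
      apply (rule mstep_I2[where \<alpha> = "ann_stack (\<lambda>k x. eG A (x, ann cs i k)) \<alpha>"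
            and g' = "eG A (g', ann cs (Suc i) (length \<alpha>))"])
      using h e r by (auto simp: lift_def PN_def ann_stack_Nil_iff)
  next
    fix \<alpha> g' assume h: "(fst (cs ! i), Some g', None, fst (cs ! Suc i)) \<in> trans A" "snd (cs ! i) = g' # \<alpha>" "snd (cs ! Suc i) = \<alpha>"
    have e: "ann_stack (\<lambda>k x. eG A (x, ann cs i k)) \<alpha> = ann_stack (\<lambda>k x. eG A (x, ann cs (Suc i) k)) \<alpha>"
    proof (rule ann_stack_cong)
      fix k x assume "k < length \<alpha>"
      then show "eG A (x, ann cs i k) = eG A (x, ann cs (Suc i) k)" using ann_shift[of k cs i] h(3) by simp
    qed
    have p: "ann cs i (length \<alpha>) = fst (cs ! Suc i)" by (rule ann_pop) (use h in simp)
    show ?thesis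
      apply (rule mstep_I3[where \<alpha> = "ann_stack (\<lambda>k x. eG A (x, ann cs i k)) \<alpha>"
            and g = "eG A (g', fst (cs ! Suc i))"])
      using h e p by (auto simp: lift_def PN_def)
  qed
qed

lemma lang_sub2: assumes "is_mpda A" shows "lang A \<subseteq> lang (PN A)"
proof
  fix w assume "w \<in> lang A"
  then obtain cs where r: "accepting_run A cs" and w: "w = map (\<lambda>c. out A (fst c)) cs"
    unfolding lang_def by blast
  let ?N = "length cs"
  define cs' where "cs' = map (lift A cs) [0..<?N]"
  have ne: "cs \<noteq> []" and l: "snd (last cs) = []" and lf: "fst (last cs) \<in> fin A"
    and h0: "fst (hd cs) \<in> init A" and hs: "\<exists>g \<in> stack A. snd (hd cs) = [g]"
    using r unfolding accepting_run_def by auto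
  from hs obtain g where g: "g \<in> stack A" "snd (cs ! 0) = [g]" using ne by (auto simp: hd_conv_nth)
  have "0 \<noteq> ?N - 1" using g l ne by (auto simp: last_conv_nth)
  then have a0: "ann cs 0 0 \<in> states A" using ann_in[OF assms r, of 0] g by simp
  have "accepting_run (PN A) cs'"
    unfolding accepting_run_def
  proof (intro conjI allI impI)
    show "cs' \<noteq> []" using ne by (simp add: cs'_def)
    fix i assume "Suc i < length cs'"
    then show "mstep (PN A) (cs' ! i) (cs' ! Suc i)"
      using lift_step[OF assms r, of i] by (simp add: cs'_def del: upt_Suc)
  next
    show "fst (hd cs') \<in> init (PN A)" using ne h0
      by (simp add: cs'_def hd_map hd_conv_nth lift_def PN_def del: upt_Suc)
    show "\<exists>g\<in>stack (PN A). snd (hd cs') = [g]" using ne g a0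
      by (simp add: cs'_def hd_map lift_def PN_def del: upt_Suc)
    show "fst (last cs') \<in> fin (PN A)" using ne lf
      by (simp add: cs'_def last_map lift_def PN_def last_conv_nth del: upt_Suc)
    show "snd (last cs') = []" using ne l
      by (simp add: cs'_def last_map lift_def PN_def last_conv_nth del: upt_Suc)
  qed
  moreover have "w = map (\<lambda>c. out (PN A) (fst c)) cs'"
    unfolding w cs'_def
    by (rule nth_equalityI) (auto simp: lift_def PN_def dQ_eQ[OF assms] run_inv[OF assms r])
  ultimately show "w \<in> lang (PN A)" unfolding lang_def by blast
qed

theorem lemma3p3:
  fixes A :: "('q, 'a, 'g) mpda"
  assumes "is_mpda A"
  shows "\<exists>A' :: (nat, 'a, nat) mpda. is_mpda A' \<and> pop_normalized A' \<and> lang A' = lang A"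
  using PN_mpda[OF assms] PN_popnorm[OF assms] lang_sub1[OF assms] lang_sub2[OF assms] by blast

end
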